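(* Let $P^1,\dots,P^4\in\mathbb{R}^n$ be in general position, let $Q^0$ be the equidistant point from $P^1,\dots,P^4$ with barycentric coordinate $\boldsymbol\lambda^0$, and suppose $\lambda^0_1<0$, $\lambda^0_2<0$, $\lambda^0_3\ge0$, $\lambda^0_4\ge0$. Let $Q^{1(1)}=\pi(Q^0|L(P^2,P^3,P^4))$ and $Q^{1(2)}=\pi(Q^0|L(P^1,P^3,P^4))$, with barycentric coordinates $\boldsymbol\lambda^{1(1)},\boldsymbol\lambda^{1(2)}$ about $P^1,\dots,P^4$, and suppose $\lambda^{1(2)}_1<0$. Suppose further $\lambda^{1(1)}_2\ge0$, $\lambda^{1(1)}_3<0$, $\lambda^{1(1)}_4\ge0$, and let $Q^{2\dagger}=\pi(Q^0|L(P^2,P^4))$. Then the center of the smallest enclosing circle of $P^1,\dots,P^4$ is $Q^\ast=Q^{2\dagger}$ and its radius is $d^\ast=d(P^2,Q^{2\dagger})$.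
   Context: $d$ is the Euclidean distance. Points are in general position if $P^2-P^1,\dots,P^m-P^1$ are linearly independent. $L(S^1,\dots,S^r)$ is the affine subspace spanned by the points; $\pi(Q'|L)$ is the orthogonal projection onto the affine subspace $L$. The barycentric coordinate of $Q\in L(P^1,\dots,P^m)$ is the unique $\boldsymbol\lambda$ with $\sum_i\lambda_i=1$, $Q=\sum_i\lambda_iP^i$. The equidistant point is the unique $Q^0\in L(P^1,\dots,P^m)$ with all $d(P^i,Q^0)$ equal. The smallest enclosing circle has center $Q^\ast$ attaining $\min_Q\max_i d(P^i,Q)$ and radius $d^\ast$ equal to this minimum. *)

theory Defs
  imports "HOL-Analysis.Analysis"
begin

text \<open>Points are indexed P 1, ..., P m (a function from nat into the space).\<close>

definition general_position :: "(nat \<Rightarrow> 'a::euclidean_space) \<Rightarrow> nat \<Rightarrow> bool" where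
  "general_position P m \<longleftrightarrow>
     (\<forall>c::nat \<Rightarrow> real. (\<Sum>i\<in>{2..m}. c i *\<^sub>R (P i - P 1)) = 0 \<longrightarrow> (\<forall>i\<in>{2..m}. c i = 0))"

definition aff_span :: "(nat \<Rightarrow> 'a::euclidean_space) \<Rightarrow> nat set \<Rightarrow> 'a set" where
  "aff_span P I = affine hull (P ` I)"

definition proj :: "'a::euclidean_space \<Rightarrow> 'a set \<Rightarrow> 'a" where
  "proj Q L = closest_point L Q"

definition bary :: "(nat \<Rightarrow> 'a::euclidean_space) \<Rightarrow> nat \<Rightarrow> 'a \<Rightarrow> (nat \<Rightarrow> real)" where
  "bary P m Q = (THE l. (\<forall>i. i \<notin> {1..m} \<longrightarrow> l i = 0) \<and>
                        (\<Sum>i\<in>{1..m}. l i) = 1 \<and> Q = (\<Sum>i\<in>{1..m}. l i *\<^sub>R P i))"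

definition equidistant_point :: "(nat \<Rightarrow> 'a::euclidean_space) \<Rightarrow> nat \<Rightarrow> 'a" where
  "equidistant_point P m = (THE Q. Q \<in> aff_span P {1..m} \<and>
                              (\<forall>i\<in>{1..m}. \<forall>j\<in>{1..m}. dist (P i) Q = dist (P j) Q))"

definition enc_radius :: "(nat \<Rightarrow> 'a::euclidean_space) \<Rightarrow> nat \<Rightarrow> 'a \<Rightarrow> real" where
  "enc_radius P m Q = Max ((\<lambda>i. dist (P i) Q) ` {1..m})"

definition is_smallest_enclosing :: "(nat \<Rightarrow> 'a::euclidean_space) \<Rightarrow> nat \<Rightarrow> 'a \<Rightarrow> real \<Rightarrow> bool" where
  "is_smallest_enclosing P m C r \<longleftrightarrow>
     (\<forall>Q. enc_radius P m C \<le> enc_radius P m Q) \<and>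
     (\<forall>Q. enc_radius P m Q = enc_radius P m C \<longrightarrow> Q = C) \<and>
     r = enc_radius P m C"

end

theory Submission
  imports Defs
begin

lemma affine_hull_4:
  fixes a b c d :: "'a::real_vector"
  shows "affine hull {a,b,c,d} = { t *\<^sub>R a + u *\<^sub>R b + v *\<^sub>R c + w *\<^sub>R d| t u v w. t + u + v + w = 1}"
proof -
  have *:
    "\<And>x y z. z = x - y \<longleftrightarrow> y + z = (x::real)"
    "\<And>x y z. z = x - y \<longleftrightarrow> y + z = (x::'a)" by auto
  show ?thesis
    apply (simp add: affine_hull_finite affine_hull_finite_step)
    unfolding *
    apply safe
     apply (metis add.assoc)
    apply (rule_tac x=t in exI, rule_tac x=u in exI, force)
    done
qed

lemma closest_affine_orth:
  fixes S :: "'a::euclidean_space set"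
  assumes "affine S" "closed S" "S \<noteq> {}" "y \<in> S"
  shows "inner (a - closest_point S a) (y - closest_point S a) = 0"
proof -
  let ?c = "closest_point S a"
  have c: "?c \<in> S" using closest_point_in_set assms by blast
  have 1: "inner (a - ?c) (y - ?c) \<le> 0"
    using closest_point_dot[OF affine_imp_convex[OF assms(1)] assms(2) assms(4)] .
  have "?c + (-1) *\<^sub>R (y - ?c) \<in> S" using mem_affine_3_minus[OF assms(1) c assms(4) c] .
  then have "inner (a - ?c) ((?c + (-1) *\<^sub>R (y - ?c)) - ?c) \<le> 0"
    using closest_point_dot[OF affine_imp_convex[OF assms(1)] assms(2)] by blast
  then have "inner (a - ?c) (y - ?c) \<ge> 0" by (metis add_diff_cancel_left' inner_minus_right neg_le_0_iff_le scaleR_minus1_left)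
  with 1 show ?thesis by linarith
qed

lemma sum4: "(\<Sum>i\<in>{1..4::nat}. f i) = f 1 + f 2 + f 3 + f 4"
proof -
  have "{1..4::nat} = {1,2,3,4}" by auto
  then show ?thesis by (simp add: algebra_simps)
qed

lemma sum234: "(\<Sum>i\<in>{2..4::nat}. f i) = f 2 + f 3 + f 4"
proof -
  have "{2..4::nat} = {2,3,4}" by auto
  then show ?thesis by (simp add: algebra_simps)
qed

lemma gp4:
  assumes "general_position P 4"
    and "c2 *\<^sub>R (P 2 - P 1) + c3 *\<^sub>R (P 3 - P 1) + c4 *\<^sub>R (P 4 - P 1) = 0"
  shows "c2 = 0 \<and> c3 = 0 \<and> c4 = 0"
proof -
  let ?c = "\<lambda>i::nat. if i = 2 then c2 else if i = 3 then c3 else c4"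
  have eq: "(\<Sum>i\<in>{2..4}. ?c i *\<^sub>R (P i - P 1)) = 0"
    unfolding sum234 using assms(2) by simp
  moreover have H: "\<And>c. (\<Sum>i\<in>{2..4}. c i *\<^sub>R (P i - P 1)) = 0 \<Longrightarrow> \<forall>i\<in>{2..4::nat}. c i = 0"
    using assms(1) unfolding general_position_def by blast
  have "\<forall>i\<in>{2..4}. ?c i = 0" by (rule H[OF eq])
  moreover have "(2::nat) \<in> {2..4}" "(3::nat)\<in>{2..4}" "(4::nat) \<in> {2..4}" by auto
  ultimately have "?c 2 = 0" "?c 3 = 0" "?c 4 = 0" by blast+
  then show ?thesis by simp
qed

lemma bary_eq:
  assumes gp: "general_position P 4"
    and z: "\<forall>i. i \<notin> {1..4} \<longrightarrow> l i = 0" and s: "sum l {1..4} = 1"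
    and q: "Q = (\<Sum>i\<in>{1..4}. l i *\<^sub>R P i)"
  shows "bary P 4 Q = l"
  unfolding bary_def
proof (rule the_equality)
  show "(\<forall>i. i \<notin> {1..4} \<longrightarrow> l i = 0) \<and> sum l {1..4} = 1 \<and> Q = (\<Sum>i\<in>{1..4}. l i *\<^sub>R P i)"
    using z s q by blast
next
  fix m assume m: "(\<forall>i. i \<notin> {1..4} \<longrightarrow> m i = 0) \<and> sum m {1..4::nat} = 1 \<and> Q = (\<Sum>i\<in>{1..4}. m i *\<^sub>R P i)"
  have ms: "sum m {1..4} = 1" and mq: "Q = (\<Sum>i\<in>{1..4}. m i *\<^sub>R P i)" using m by blast+
  have e1: "m 1 + m 2 + m 3 + m 4 = 1" "l 1 + l 2 + l 3 + l 4 = 1" using ms s unfolding sum4 by simp_all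
  have e2: "m 1 *\<^sub>R P 1 + m 2 *\<^sub>R P 2 + m 3 *\<^sub>R P 3 + m 4 *\<^sub>R P 4 = l 1 *\<^sub>R P 1 + l 2 *\<^sub>R P 2 + l 3 *\<^sub>R P 3 + l 4 *\<^sub>R P 4"
    using mq q unfolding sum4 by simp
  have m1: "m 1 = 1 - m 2 - m 3 - m 4" "l 1 = 1 - l 2 - l 3 - l 4" using e1 by linarith+
  have "(m 2 - l 2) *\<^sub>R (P 2 - P 1) + (m 3 - l 3) *\<^sub>R (P 3 - P 1) + (m 4 - l 4) *\<^sub>R (P 4 - P 1) = 0"
    using e2 unfolding m1 by (simp add: algebra_simps)
  then have "m 2 - l 2 = 0 \<and> m 3 - l 3 = 0 \<and> m 4 - l 4 = 0" by (rule gp4[OF gp])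
  then have "m 2 = l 2 \<and> m 3 = l 3 \<and> m 4 = l 4" by simp
  with m1 have "m i = l i" if "i \<in> {1..4}" for i
  proof -
    have "i = 1 \<or> i = 2 \<or> i = 3 \<or> i = 4" using that by auto
    then show ?thesis using \<open>m 2 = l 2 \<and> m 3 = l 3 \<and> m 4 = l 4\<close> m1 by auto
  qed
  then show "m = l" using m z by (metis ext)
qed

lemma dist_eq_inner: "dist a b = dist c d \<longleftrightarrow> inner (a-b) (a-b) = inner (c-d) (c-d)"
  by (simp add: dist_norm norm_eq_sqrt_inner)

lemma inner_sq_diff:
  fixes a b x :: "'a::real_inner"
  shows "inner (a-x) (a-x) - inner (b-x) (b-x) = inner a a - inner b b - 2 * inner (a - b) x"
  by (simp add: inner_diff_left inner_diff_right inner_commute algebra_simps)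

lemma inner_shift:
  fixes Y f :: "'a::real_inner"
  shows "inner (Y + s *\<^sub>R f) (Y + s *\<^sub>R f) = inner Y Y + 2 * s * inner f Y + s^2 * inner f f"
  by (simp add: inner_add_left inner_add_right inner_commute algebra_simps power2_eq_square)

lemma equi_step:
  fixes X p r f :: "'a::real_inner"
  assumes o: "\<forall>q\<in>S. inner f (q - p) = 0" and nz: "inner f (r - p) \<noteq> 0"
    and e: "\<forall>q\<in>S. inner (X - q) (X - q) = inner (X - p) (X - p)"
  shows "\<exists>s. \<forall>q\<in>insert r S. inner (X + s *\<^sub>R f - q) (X + s *\<^sub>R f - q) = inner (X + s *\<^sub>R f - p) (X + s *\<^sub>R f - p)"
proof -
  define s where "s = (inner (X - r) (X - r) - inner (X - p) (X - p)) / (2 * inner f (r - p))"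
  have ex: "X + s *\<^sub>R f - q = (X - q) + s *\<^sub>R f" for q by (simp add: algebra_simps)
  have fx: "inner f (X - q) = inner f (X - p) - inner f (q - p)" for q
    by (simp add: inner_diff_right)
  have "inner (X + s *\<^sub>R f - q) (X + s *\<^sub>R f - q) = inner (X + s *\<^sub>R f - p) (X + s *\<^sub>R f - p)"
    if q: "q \<in> insert r S" for q
  proof (cases "q = r")
    case True
    have "2 * s * inner f (r - p) = inner (X - r) (X - r) - inner (X - p) (X - p)"
      unfolding s_def using nz by simp
    then show ?thesis unfolding True ex inner_shift fx[of r] by (simp add: algebra_simps)
  next
    case False
    then have "q \<in> S" using q by auto
    then show ?thesis unfolding ex inner_shift fx[of q] using o e by simp
  qed
  then show ?thesis by blast
qed

lemma gp_not_in3: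
  assumes gp: "general_position P 4"
  shows "P 4 \<notin> affine hull {P 1, P 2, P 3}"
proof
  assume "P 4 \<in> affine hull {P 1, P 2, P 3}"
  then obtain u v w where "u + v + w = 1" "P 4 = u *\<^sub>R P 1 + v *\<^sub>R P 2 + w *\<^sub>R P 3"
    unfolding affine_hull_3 by blast
  then have "v *\<^sub>R (P 2 - P 1) + w *\<^sub>R (P 3 - P 1) + (-1) *\<^sub>R (P 4 - P 1) = 0"
    by (simp add: algebra_simps) (metis add.commute add_diff_cancel_right' scaleR_add_left scaleR_one)
  from gp4[OF gp this] show False by simp
qed

lemma gp_not_in2:
  assumes gp: "general_position P 4"
  shows "P 3 \<notin> affine hull {P 1, P 2}"
proof
  assume "P 3 \<in> affine hull {P 1, P 2}"
  then obtain u v where "u + v = 1" "P 3 = u *\<^sub>R P 1 + v *\<^sub>R P 2"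
    unfolding affine_hull_2 by blast
  then have "v *\<^sub>R (P 2 - P 1) + (-1) *\<^sub>R (P 3 - P 1) + 0 *\<^sub>R (P 4 - P 1) = 0"
    by (simp add: algebra_simps) (metis add.commute add_diff_cancel_right' scaleR_add_left scaleR_one)
  from gp4[OF gp this] show False by simp
qed

lemma gp_24:
  assumes gp: "general_position P 4"
  shows "P 2 \<noteq> P 4"
proof
  assume "P 2 = P 4"
  then have "1 *\<^sub>R (P 2 - P 1) + 0 *\<^sub>R (P 3 - P 1) + (-1) *\<^sub>R (P 4 - P 1) = 0" by simp
  from gp4[OF gp this] show False by simp
qed

lemma inner_swap: "inner (a - b) (a - b) = inner (b - a) (b - (a::'a::real_inner))"
  by (metis inner_minus_left inner_minus_right minus_diff_eq minus_minus)

lemma inner_diff_sq: "inner (a - b) (a - b) = inner a a - 2 * inner a b + inner b (b::'a::real_inner)"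
  by (simp add: inner_diff_left inner_diff_right inner_commute)

lemma orth_vec:
  fixes r p :: "'a::euclidean_space"
  assumes "T \<noteq> {}" "p \<in> T" "r \<notin> affine hull T"
  shows "\<exists>f. (\<forall>q\<in>T. inner f (q - p) = 0) \<and> inner f (r - p) \<noteq> 0"
proof -
  let ?A = "affine hull T"
  let ?Z = "closest_point ?A r"
  have ne: "?A \<noteq> {}" using assms(1) by simp
  have Z: "?Z \<in> ?A" using closest_point_in_set[OF closed_affine_hull ne] .
  have o: "inner (r - ?Z) (q - ?Z) = 0" if "q \<in> T" for q
  proof -
    have "q \<in> ?A" using that by (rule hull_inc)
    then show ?thesis by (rule closest_affine_orth[OF affine_affine_hull closed_affine_hull ne])
  qed
  have A1: "(\<forall>q\<in>T. inner (r - ?Z) (q - p) = 0)"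
  proof
    fix q assume "q \<in> T"
    have "q - p = (q - ?Z) - (p - ?Z)" by simp
    then show "inner (r - ?Z) (q - p) = 0" using o[OF \<open>q \<in> T\<close>] o[OF assms(2)] by (simp add: inner_diff_right)
  qed
  have A2: "inner (r - ?Z) (r - p) \<noteq> 0"
  proof -
    have "r - p = (r - ?Z) - (p - ?Z)" by simp
    then have "inner (r - ?Z) (r - p) = inner (r - ?Z) (r - ?Z)" using o[OF assms(2)] by (simp add: inner_diff_right)
    moreover have "r \<noteq> ?Z" using Z assms(3) by auto
    ultimately show ?thesis by simp
  qed
  show ?thesis using A1 A2 by (intro exI[of _ "r - ?Z"]) (simp only: conj_absorb, blast)
qed

lemma aff4: "aff_span P {1..4} = affine hull {P 1, P 2, P 3, P 4}"
proof -
  have "{1..4::nat} = {1,2,3,4}" by auto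
  then show ?thesis unfolding aff_span_def by simp
qed

lemma circ_exists:
  fixes P :: "nat \<Rightarrow> 'a::euclidean_space"
  assumes gp: "general_position P 4"
  shows "\<exists>C\<in>aff_span P {1..4}. \<forall>i\<in>{1..4}. dist (P i) C = dist (P 1) C"
proof -
  define X2 where "X2 = (1/2) *\<^sub>R (P 1 + P 2)"
  have e2: "\<forall>q\<in>{P 1, P 2}. inner (X2 - q) (X2 - q) = inner (X2 - P 1) (X2 - P 1)"
  proof -
    have "X2 - P 2 = - (X2 - P 1)" unfolding X2_def by (simp add: algebra_simps) (metis scaleR_half_double scaleR_right_distrib add.assoc)
    then have "inner (X2 - P 2) (X2 - P 2) = inner (X2 - P 1) (X2 - P 1)"
      by (simp only: inner_minus_left inner_minus_right minus_minus)
    then show ?thesis by blast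
  qed
  obtain f3 where f3: "\<forall>q\<in>{P 1, P 2}. inner f3 (q - P 1) = 0" "inner f3 (P 3 - P 1) \<noteq> 0"
    using orth_vec[of "{P 1, P 2}" "P 1" "P 3", OF _ _ gp_not_in2[OF gp]] by blast
  obtain s3 where s3: "\<forall>q\<in>{P 3, P 1, P 2}. inner (X2 + s3 *\<^sub>R f3 - q) (X2 + s3 *\<^sub>R f3 - q) = inner (X2 + s3 *\<^sub>R f3 - P 1) (X2 + s3 *\<^sub>R f3 - P 1)"
    using equi_step[OF f3 e2] by blast
  define X3 where "X3 = X2 + s3 *\<^sub>R f3"
  have e3: "\<forall>q\<in>{P 1, P 2, P 3}. inner (X3 - q) (X3 - q) = inner (X3 - P 1) (X3 - P 1)"
    unfolding X3_def using s3 by blast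
  obtain f4 where f4: "\<forall>q\<in>{P 1, P 2, P 3}. inner f4 (q - P 1) = 0" "inner f4 (P 4 - P 1) \<noteq> 0"
    using orth_vec[of "{P 1, P 2, P 3}" "P 1" "P 4", OF _ _ gp_not_in3[OF gp]] by blast
  obtain s4 where s4: "\<forall>q\<in>{P 4, P 1, P 2, P 3}. inner (X3 + s4 *\<^sub>R f4 - q) (X3 + s4 *\<^sub>R f4 - q) = inner (X3 + s4 *\<^sub>R f4 - P 1) (X3 + s4 *\<^sub>R f4 - P 1)"
    using equi_step[OF f4 e3] by blast
  define X where "X = X3 + s4 *\<^sub>R f4"
  have e4: "inner (X - P i) (X - P i) = inner (X - P 1) (X - P 1)" if "i \<in> {1..4}" for i
  proof -
    have "i = 1 \<or> i = 2 \<or> i = 3 \<or> i = 4" using that by auto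
    then have "P i \<in> {P 4, P 1, P 2, P 3}" by blast
    then show ?thesis unfolding X_def using s4 by blast
  qed
  let ?A = "affine hull {P 1, P 2, P 3, P 4}"
  let ?C = "closest_point ?A X"
  have ne: "?A \<noteq> {}" by simp
  have C: "?C \<in> ?A" using closest_point_in_set[OF closed_affine_hull ne] .
  have key: "inner (X - P i) (X - P i) = inner (X - ?C) (X - ?C) + inner (P i - ?C) (P i - ?C)" if "i \<in> {1..4}" for i
  proof -
    have "P i \<in> P ` {1..4}" using that by blast
    then have "P i \<in> aff_span P {1..4}" unfolding aff_span_def by (rule hull_inc)
    then have "P i \<in> ?A" unfolding aff4 .
    then have o: "inner (X - ?C) (P i - ?C) = 0"
      using closest_affine_orth[OF affine_affine_hull closed_affine_hull ne] by blast
    have "X - P i = (X - ?C) - (P i - ?C)" by simp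
    then show ?thesis using o by (simp only: inner_diff_sq)
  qed
  have "\<forall>i\<in>{1..4}. dist (P i) ?C = dist (P 1) ?C"
  proof
    fix i :: nat assume i: "i \<in> {1..4}"
    have "(1::nat) \<in> {1..4}" by simp
    then show "dist (P i) ?C = dist (P 1) ?C"
      unfolding dist_eq_inner using key[OF i] key[OF \<open>(1::nat) \<in> {1..4}\<close>] e4[OF i] by linarith
  qed
  moreover have "?C \<in> aff_span P {1..4}" unfolding aff4 by (rule C)
  ultimately show ?thesis by blast
qed

lemma equi_unique:
  fixes P :: "nat \<Rightarrow> 'a::euclidean_space"
  assumes Q: "Q \<in> aff_span P {1..4}" and C: "C \<in> aff_span P {1..4}"
    and eQ: "\<forall>i\<in>{1..4}. dist (P i) Q = dist (P 1) Q"
    and eC: "\<forall>i\<in>{1..4}. dist (P i) C = dist (P 1) C"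
  shows "Q = C"
proof -
  obtain t1 t2 t3 t4 where t: "t1 + t2 + t3 + t4 = 1" "Q = t1 *\<^sub>R P 1 + t2 *\<^sub>R P 2 + t3 *\<^sub>R P 3 + t4 *\<^sub>R P 4"
    using Q unfolding aff4 affine_hull_4 by blast
  obtain s1 s2 s3 s4 where s: "s1 + s2 + s3 + s4 = 1" "C = s1 *\<^sub>R P 1 + s2 *\<^sub>R P 2 + s3 *\<^sub>R P 3 + s4 *\<^sub>R P 4"
    using C unfolding aff4 affine_hull_4 by blast
  have t1: "t1 = 1 - t2 - t3 - t4" and s1: "s1 = 1 - s2 - s3 - s4" using t s by linarith+
  have d: "Q - C = (t2 - s2) *\<^sub>R (P 2 - P 1) + (t3 - s3) *\<^sub>R (P 3 - P 1) + (t4 - s4) *\<^sub>R (P 4 - P 1)"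
    unfolding t(2) s(2) t1 s1 by (simp add: algebra_simps)
  have o: "inner (P i - P 1) (Q - C) = 0" if "i \<in> {1..4}" for i
  proof -
    have a: "inner (P i - Q) (P i - Q) = inner (P 1 - Q) (P 1 - Q)"
      using eQ that unfolding dist_eq_inner by blast
    have b: "inner (P i - C) (P i - C) = inner (P 1 - C) (P 1 - C)"
      using eC that unfolding dist_eq_inner by blast
    have "inner (P i - P 1) Q = inner (P i - P 1) C"
      using inner_sq_diff[of "P i" Q "P 1"] inner_sq_diff[of "P i" C "P 1"] a b by linarith
    then show ?thesis by (simp add: inner_diff_right)
  qed
  have "(2::nat) \<in> {1..4}" "(3::nat) \<in> {1..4}" "(4::nat) \<in> {1..4}" by auto
  then have "inner (Q - C) (Q - C) = 0"
    unfolding d[symmetric, THEN sym] using o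
    by (simp add: d inner_add_left inner_scaleR_left)
  then show ?thesis by simp
qed

lemma equi_props:
  fixes P :: "nat \<Rightarrow> 'a::euclidean_space"
  assumes gp: "general_position P 4"
  shows "equidistant_point P 4 \<in> aff_span P {1..4} \<and>
    (\<forall>i\<in>{1..4}. \<forall>j\<in>{1..4}. dist (P i) (equidistant_point P 4) = dist (P j) (equidistant_point P 4))"
  unfolding equidistant_point_def
proof (rule theI')
  obtain C where C: "C \<in> aff_span P {1..4}" "\<forall>i\<in>{1..4}. dist (P i) C = dist (P 1) C"
    using circ_exists[OF gp] by blast
  show "\<exists>!Q. Q \<in> aff_span P {1..4} \<and> (\<forall>i\<in>{1..4}. \<forall>j\<in>{1..4}. dist (P i) Q = dist (P j) Q)"
  proof (rule ex1I[of _ C])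
    show "C \<in> aff_span P {1..4} \<and> (\<forall>i\<in>{1..4}. \<forall>j\<in>{1..4}. dist (P i) C = dist (P j) C)"
      using C by metis
  next
    fix Q assume "Q \<in> aff_span P {1..4} \<and> (\<forall>i\<in>{1..4}. \<forall>j\<in>{1..4}. dist (P i) Q = dist (P j) Q)"
    moreover have "(1::nat) \<in> {1..4}" by simp
    ultimately show "Q = C" using equi_unique[OF _ C(1) _ C(2)] by blast
  qed
qed

lemma dist_sq: "(dist a b)^2 = inner (a - b) (a - (b::'a::real_inner))"
  by (simp add: dist_norm power2_norm_eq_inner)

lemma sph:
  fixes p q c m :: "'a::real_inner"
  shows "inner (p - m) (p - m) - inner (q - m) (q - m) = inner (p - c) (p - c) - inner (q - c) (q - c) + 2 * inner (p - q) (c - m)"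
  by (simp add: inner_diff_left inner_diff_right inner_commute algebra_simps)

lemma par:
  fixes e z :: "'a::real_inner"
  shows "inner (e + z) (e + z) + inner (z - e) (z - e) = 2 * inner e e + 2 * inner z z"
  by (simp add: inner_diff_left inner_diff_right inner_add_left inner_add_right inner_commute algebra_simps)

theorem theorem11:
  fixes P :: "nat \<Rightarrow> 'a::euclidean_space"
  assumes gp: "general_position P 4"
    and l0: "bary P 4 (equidistant_point P 4) 1 < 0"
            "bary P 4 (equidistant_point P 4) 2 < 0"
            "bary P 4 (equidistant_point P 4) 3 \<ge> 0"
            "bary P 4 (equidistant_point P 4) 4 \<ge> 0"
    and l12: "bary P 4 (proj (equidistant_point P 4) (aff_span P {1,3,4})) 1 < 0"
    and l11: "bary P 4 (proj (equidistant_point P 4) (aff_span P {2,3,4})) 2 \<ge> 0"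
             "bary P 4 (proj (equidistant_point P 4) (aff_span P {2,3,4})) 3 < 0"
             "bary P 4 (proj (equidistant_point P 4) (aff_span P {2,3,4})) 4 \<ge> 0"
  shows "is_smallest_enclosing P 4
           (proj (equidistant_point P 4) (aff_span P {2,4}))
           (dist (P 2) (proj (equidistant_point P 4) (aff_span P {2,4})))"
proof -
  define C where "C = equidistant_point P 4"
  have Cin: "C \<in> aff_span P {1..4}"
    and Ceq: "\<forall>i\<in>{1..4}. \<forall>j\<in>{1..4}. dist (P i) C = dist (P j) C"
    using equi_props[OF gp] unfolding C_def by blast+
  obtain a1 a2 a3 a4 where a: "a1 + a2 + a3 + a4 = 1" "C = a1 *\<^sub>R P 1 + a2 *\<^sub>R P 2 + a3 *\<^sub>R P 3 + a4 *\<^sub>R P 4"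
    using Cin unfolding aff4 affine_hull_4 by blast
  define la where "la = (\<lambda>i::nat. if i = 1 then a1 else if i = 2 then a2 else if i = 3 then a3 else if i = 4 then a4 else 0)"
  have "bary P 4 C = la"
  proof (rule bary_eq[OF gp])
    show "\<forall>i. i \<notin> {1..4} \<longrightarrow> la i = 0" unfolding la_def by auto
    show "sum la {1..4} = 1" unfolding sum4 la_def using a(1) by simp
    show "C = (\<Sum>i\<in>{1..4}. la i *\<^sub>R P i)" unfolding sum4 la_def using a(2) by simp
  qed
  then have a1: "a1 < 0" and a3: "a3 \<ge> 0" using l0(1,3) unfolding C_def[symmetric] la_def by auto
  define Oc where "Oc = proj C (aff_span P {2,3,4})"
  have A3: "aff_span P {2,3,4} = affine hull {P 2, P 3, P 4}" unfolding aff_span_def by simp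
  have neO: "affine hull {P 2, P 3, P 4} \<noteq> {}" by simp
  have Oin: "Oc \<in> affine hull {P 2, P 3, P 4}" unfolding Oc_def proj_def A3
    using closest_point_in_set[OF closed_affine_hull neO] .
  obtain u v w where uvw: "u + v + w = 1" "Oc = u *\<^sub>R P 2 + v *\<^sub>R P 3 + w *\<^sub>R P 4"
    using Oin unfolding affine_hull_3 by blast
  define lo where "lo = (\<lambda>i::nat. if i = 2 then u else if i = 3 then v else if i = 4 then w else 0)"
  have "bary P 4 Oc = lo"
  proof (rule bary_eq[OF gp])
    show "\<forall>i. i \<notin> {1..4} \<longrightarrow> lo i = 0" unfolding lo_def by auto
    show "sum lo {1..4} = 1" unfolding sum4 lo_def using uvw(1) by simp
    show "Oc = (\<Sum>i\<in>{1..4}. lo i *\<^sub>R P i)" unfolding sum4 lo_def using uvw(2) by simp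
  qed
  then have v: "v < 0" using l11(2) unfolding C_def[symmetric] Oc_def[symmetric] lo_def by auto
  have oO: "inner (C - Oc) (y - Oc) = 0" if "y \<in> {P 2, P 3, P 4}" for y
  proof -
    have "y \<in> affine hull {P 2, P 3, P 4}" using that by (rule hull_inc)
    then show ?thesis unfolding Oc_def proj_def A3
      by (rule closest_affine_orth[OF affine_affine_hull closed_affine_hull neO])
  qed
  define M where "M = proj C (aff_span P {2,4})"
  have A2: "aff_span P {2,4} = affine hull {P 2, P 4}" unfolding aff_span_def by simp
  have neM: "affine hull {P 2, P 4} \<noteq> {}" by simp
  have Min: "M \<in> affine hull {P 2, P 4}" unfolding M_def proj_def A2
    using closest_point_in_set[OF closed_affine_hull neM] .
  obtain al be where ab: "al + be = 1" "M = al *\<^sub>R P 2 + be *\<^sub>R P 4"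
    using Min unfolding affine_hull_2 by blast
  have oM: "inner (C - M) (y - M) = 0" if "y \<in> {P 2, P 4}" for y
  proof -
    have "y \<in> affine hull {P 2, P 4}" using that by (rule hull_inc)
    then show ?thesis unfolding M_def proj_def A2
      by (rule closest_affine_orth[OF affine_affine_hull closed_affine_hull neM])
  qed
  have h1: "inner (C - M) (P 4 - P 2) = 0"
  proof -
    have "P 4 - P 2 = (P 4 - M) - (P 2 - M)" by simp
    then show ?thesis using oM[of "P 4"] oM[of "P 2"] by (simp add: inner_diff_right)
  qed
  have h2: "inner (C - Oc) (P 3 - P 2) = 0" "inner (C - Oc) (P 4 - P 2) = 0"
  proof -
    have "P 3 - P 2 = (P 3 - Oc) - (P 2 - Oc)" "P 4 - P 2 = (P 4 - Oc) - (P 2 - Oc)" by simp_all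
    then show "inner (C - Oc) (P 3 - P 2) = 0" "inner (C - Oc) (P 4 - P 2) = 0"
      using oO[of "P 4"] oO[of "P 2"] oO[of "P 3"] by (simp_all add: inner_diff_right)
  qed
  have h3: "inner (Oc - M) (P 4 - P 2) = 0"
  proof -
    have "Oc - M = (C - M) - (C - Oc)" by simp
    then show ?thesis using h1 h2(2) by (simp add: inner_diff_left)
  qed
  have h4: "M - P 2 = be *\<^sub>R (P 4 - P 2)"
  proof -
    have al: "al = 1 - be" using ab(1) by linarith
    show ?thesis unfolding ab(2) al by (simp add: algebra_simps)
  qed
  have h5: "Oc - P 2 = v *\<^sub>R (P 3 - P 2) + w *\<^sub>R (P 4 - P 2)"
  proof -
    have uu: "u = 1 - v - w" using uvw(1) by linarith
    show ?thesis unfolding uvw(2) uu by (simp add: algebra_simps)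
  qed
  define b3 where "b3 = inner (P 3 - P 2) (Oc - M)"
  have h6: "inner (Oc - P 2) (Oc - M) = inner (Oc - M) (Oc - M)"
  proof -
    have eq: "Oc - P 2 = (Oc - M) + be *\<^sub>R (P 4 - P 2)" unfolding h4[symmetric] by simp
    show ?thesis unfolding eq using h3 by (simp add: inner_add_left inner_add_right inner_commute)
  qed
  have h7: "inner (Oc - P 2) (Oc - M) = v * b3"
    unfolding h5 b3_def using h3 by (simp add: inner_add_left inner_add_right inner_commute)
  have "v * b3 \<ge> 0" using h6 h7 by simp
  then have b3: "b3 \<le> 0" using v by (simp add: zero_le_mult_iff)
  define a3' where "a3' = inner (P 3 - P 2) (C - M)"
  have h8: "a3' = b3"
  proof -
    have "inner (P 3 - P 2) (C - M) = inner (P 3 - P 2) (C - Oc) + inner (P 3 - P 2) (Oc - M)"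
      by (simp add: inner_diff_right)
    then show ?thesis using h2(1) inner_commute[of "C - Oc" "P 3 - P 2"] unfolding a3'_def b3_def by linarith
  qed
  define A1 where "A1 = inner (P 1 - P 2) (C - M)"
  have h9: "C - P 2 = a1 *\<^sub>R (P 1 - P 2) + a3 *\<^sub>R (P 3 - P 2) + a4 *\<^sub>R (P 4 - P 2)"
  proof -
    have aa: "a2 = 1 - a1 - a3 - a4" using a(1) by linarith
    show ?thesis unfolding a(2) aa by (simp add: algebra_simps)
  qed
  have h10: "inner (C - P 2) (C - M) = inner (C - M) (C - M)"
  proof -
    have eq: "C - P 2 = (C - M) + be *\<^sub>R (P 4 - P 2)" unfolding h4[symmetric] by simp
    show ?thesis unfolding eq using h1 by (simp add: inner_add_left inner_add_right inner_commute)
  qed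
  have h11: "inner (C - P 2) (C - M) = a1 * A1 + a3 * a3'"
    unfolding h9 A1_def a3'_def using h1 by (simp add: inner_add_left inner_add_right inner_commute)
  have "a1 * A1 + a3 * a3' \<ge> 0" using h10 h11 by simp
  moreover have "a3 * a3' \<le> 0" using a3 b3 h8 by (simp add: mult_nonneg_nonpos)
  ultimately have "a1 * A1 \<ge> 0" by linarith
  then have A1: "A1 \<le> 0" using a1 by (simp add: zero_le_mult_iff)
  have one: "(1::nat) \<in> {1..4}" and two: "(2::nat) \<in> {1..4}" and three: "(3::nat) \<in> {1..4}" and four: "(4::nat) \<in> {1..4}" by auto
  have R: "inner (P i - C) (P i - C) = inner (P 2 - C) (P 2 - C)" if "i \<in> {1..4}" for i
    using Ceq that two unfolding dist_eq_inner by blast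
  have d1: "inner (P 1 - M) (P 1 - M) \<le> inner (P 2 - M) (P 2 - M)"
    using sph[of "P 1" M "P 2" C] R[OF one] A1 unfolding A1_def by linarith
  have d3: "inner (P 3 - M) (P 3 - M) \<le> inner (P 2 - M) (P 2 - M)"
    using sph[of "P 3" M "P 2" C] R[OF three] b3 h8 unfolding a3'_def by linarith
  have d4: "inner (P 4 - M) (P 4 - M) = inner (P 2 - M) (P 2 - M)"
    using sph[of "P 4" M "P 2" C] R[OF four] h1 by (simp add: inner_commute)
  define D where "D = inner (P 4 - P 2) (P 4 - P 2)"
  have D: "D > 0" unfolding D_def using gp_24[OF gp] by simp
  have hP4: "P 4 - M = (1 - be) *\<^sub>R (P 4 - P 2)" using h4 by (simp add: algebra_simps)
  have e4: "inner (P 4 - M) (P 4 - M) = (1 - be)^2 * D" unfolding D_def hP4 by (simp add: power2_eq_square)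
  have hP2: "P 2 - M = (- be) *\<^sub>R (P 4 - P 2)" using h4 by (simp add: algebra_simps)
  have e2: "inner (P 2 - M) (P 2 - M) = be^2 * D" unfolding D_def hP2 by (simp add: power2_eq_square)
  have "(1 - be)^2 * D = be^2 * D" using d4 e4 e2 by simp
  then have "(1 - be)^2 = be^2" using D by simp
  then have be: "be = 1/2" by (simp add: power2_eq_square algebra_simps)
  have P4M: "P 4 - M = - (P 2 - M)" unfolding hP4 hP2 be by simp
  define r where "r = dist (P 2) M"
  have r0: "r \<ge> 0" unfolding r_def by simp
  have r2: "r^2 = inner (P 2 - M) (P 2 - M)" unfolding r_def dist_sq ..
  have le: "dist (P i) M \<le> r" if "i \<in> {1..4}" for i
  proof -
    have "i = 1 \<or> i = 2 \<or> i = 3 \<or> i = 4" using that by auto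
    then have "(dist (P i) M)^2 \<le> r^2" unfolding r2 dist_sq using d1 d3 d4 by auto
    then show ?thesis using r0 by (simp add: power2_le_iff_abs_le)
  qed
  have encM: "enc_radius P 4 M = r"
    unfolding enc_radius_def
  proof (rule Max_eqI)
    show "finite ((\<lambda>i. dist (P i) M) ` {1..4})" by simp
    show "\<And>y. y \<in> (\<lambda>i. dist (P i) M) ` {1..4} \<Longrightarrow> y \<le> r" using le by blast
    show "r \<in> (\<lambda>i. dist (P i) M) ` {1..4}" unfolding r_def using two by blast
  qed
  have ge: "dist (P i) Q \<le> enc_radius P 4 Q" if "i \<in> {1..4}" for i Q
    unfolding enc_radius_def using that by (intro Max_ge) auto
  have sumsq: "(dist (P 2) Q)^2 + (dist (P 4) Q)^2 = 2 * (dist M Q)^2 + 2 * r^2" for Q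
  proof -
    have eq1: "P 2 - Q = (P 2 - M) + (M - Q)" by simp
    have "P 4 - Q = (P 4 - M) + (M - Q)" by simp
    then have eq2: "P 4 - Q = (M - Q) - (P 2 - M)" unfolding P4M by simp
    show ?thesis unfolding dist_sq r2 eq1 eq2 using par[of "P 2 - M" "M - Q"] by linarith
  qed
  have part1: "enc_radius P 4 M \<le> enc_radius P 4 Q" for Q
  proof (rule ccontr)
    assume "\<not> ?thesis"
    then have "enc_radius P 4 Q < r" using encM by simp
    then have "dist (P 2) Q < r" "dist (P 4) Q < r" using ge[OF two, of Q] ge[OF four, of Q] by linarith+
    then have "(dist (P 2) Q)^2 < r^2" "(dist (P 4) Q)^2 < r^2"
      by (intro power_strict_mono; simp)+
    then show False using sumsq[of Q] zero_le_power2[of "dist M Q"] by linarith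
  qed
  have part2: "Q = M" if "enc_radius P 4 Q = enc_radius P 4 M" for Q
  proof -
    have "dist (P 2) Q \<le> r" "dist (P 4) Q \<le> r" using ge[OF two, of Q] ge[OF four, of Q] that encM by linarith+
    then have "(dist (P 2) Q)^2 \<le> r^2" "(dist (P 4) Q)^2 \<le> r^2"
      by (intro power_mono; simp)+
    then have "(dist M Q)^2 \<le> 0" using sumsq[of Q] by linarith
    then show ?thesis by simp
  qed
  show ?thesis
    unfolding is_smallest_enclosing_def C_def[symmetric] M_def[symmetric] r_def[symmetric]
  proof (intro conjI allI impI)
    fix Q show "enc_radius P 4 M \<le> enc_radius P 4 Q" by (rule part1)
  next
    fix Q assume "enc_radius P 4 Q = enc_radius P 4 M" then show "Q = M" by (rule part2)
  next
    show "r = enc_radius P 4 M" using encM by simp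
  qed
qed

end
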